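(* Let $p$ be a polynomial of degree $m$ with $p(t)=dt^m+O(t^{m-1})$, let $q$ be a polynomial of degree $d\ge1$ with $q(t)=t^d+O(t^{d-1})$ as $t\to\infty$, let $c\in\mathbb{C}$ and $g(z)=\int_0^zp(t)e^{q(t)}dt+c$. Let $\lambda=(d-1-m)/d$. Let $R>0$ be such that all critical values of $q$ lie in $D(0,R)$ and $2^{-d}|z|^d\le|q(z)|\le2^d|z|^d$ for $|z|\ge\frac12R^{1/d}$, let $G=\mathbb{C}\setminus(\overline{D(0,R)}\cup[0,\infty))$, let $S$ be any component of $q^{-1}(G)$ and let $\varphi$ be the branch of $q^{-1}$ on $G$ with $\varphi(G)=S$. Then there exists $c_S\in\mathbb{C}$ such that $$g(\varphi(w))=c_S+\frac{p(\varphi(w))}{q'(\varphi(w))}\Big(1+\frac{\lambda}{w}+O\big(|w|^{-1-1/d}\big)\Big)e^{w}$$ as $w\to\infty$ in $G$.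
   Context: $D(z_0,r)$ is the open disk. $q$ maps each component of $q^{-1}(G)$ conformally onto $G$, so $\varphi$ is well defined. *)

theory Defs
  imports "HOL-Complex_Analysis.Complex_Analysis" "HOL-Computational_Algebra.Polynomial"
begin

definition slitG :: "real \<Rightarrow> complex set" where
  "slitG R = - (cball 0 R \<union> {complex_of_real x | x. x \<ge> 0})"

end

theory Submission
  imports Defs "HOL-Computational_Algebra.Fundamental_Theorem_Algebra" "HOL-Real_Asymp.Real_Asymp"
begin

lemma poly_bound_coeff0:
  fixes P :: "complex poly"
  assumes "degree P \<le> k" "coeff P k = 0"
  shows "\<exists>C. \<forall>z. norm z \<ge> 1 \<longrightarrow> norm (poly P z) * norm z \<le> C * norm z ^ k"
proof -
  have eq: "poly P z = (\<Sum>i<k. coeff P i * z ^ i)" for z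
  proof -
    have "poly P z = (\<Sum>i\<le>degree P. coeff P i * z ^ i)" by (simp add: poly_altdef)
    also have "\<dots> = (\<Sum>i\<le>k. coeff P i * z ^ i)"
      by (rule sum.mono_neutral_left) (auto simp: assms coeff_eq_0)
    also have "\<dots> = (\<Sum>i<k. coeff P i * z ^ i)"
      using assms(2) by (simp add: lessThan_Suc_atMost[symmetric])
    finally show ?thesis .
  qed
  show ?thesis
  proof (intro exI allI impI)
    fix z :: complex assume z: "norm z \<ge> 1"
    have "norm (poly P z) * norm z \<le> (\<Sum>i<k. norm (coeff P i) * norm z ^ i) * norm z"
      unfolding eq by (intro mult_right_mono order.trans[OF norm_sum]) (auto simp: norm_mult norm_power)
    also have "\<dots> = (\<Sum>i<k. norm (coeff P i) * norm z ^ Suc i)"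
      by (simp add: sum_distrib_left sum_distrib_right mult_ac)
    also have "\<dots> \<le> (\<Sum>i<k. norm (coeff P i) * norm z ^ k)"
      by (intro sum_mono mult_left_mono power_increasing) (use z in auto)
    also have "\<dots> = (\<Sum>i<k. norm (coeff P i)) * norm z ^ k"
      by (simp add: sum_distrib_right)
    finally show "norm (poly P z) * norm z \<le> (\<Sum>i<k. norm (coeff P i)) * norm z ^ k" .
  qed
qed

lemma poly_bound_upper:
  fixes P :: "complex poly"
  assumes "degree P \<le> k"
  shows "\<exists>C. \<forall>z. norm z \<ge> 1 \<longrightarrow> norm (poly P z) \<le> C * norm z ^ k"
proof -
  obtain C where C: "\<And>z. norm z \<ge> 1 \<Longrightarrow> norm (poly P z) * norm z \<le> C * norm z ^ Suc k"
    using poly_bound_coeff0[of P "Suc k"] assms by (auto simp: coeff_eq_0)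
  show ?thesis
  proof (intro exI allI impI)
    fix z :: complex assume z: "norm z \<ge> 1"
    have "norm (poly P z) * norm z \<le> (C * norm z ^ k) * norm z" using C[OF z] by (simp add: mult_ac)
    moreover have "z \<noteq> 0" using z by auto
    ultimately show "norm (poly P z) \<le> C * norm z ^ k" by (simp add: mult_le_cancel_right)
  qed
qed

lemma poly_bound_lower:
  fixes P :: "complex poly"
  assumes "P \<noteq> 0"
  shows "\<exists>c Z. c > 0 \<and> (\<forall>z. norm z \<ge> Z \<longrightarrow> norm (poly P z) \<ge> c * norm z ^ degree P)"
proof -
  define k where "k = degree P"
  define L where "L = lead_coeff P"
  have L: "L \<noteq> 0" using assms by (simp add: L_def)
  define P0 where "P0 = P - monom L k"
  have "degree P0 \<le> k" unfolding P0_def k_def by (intro degree_diff_le) (auto simp: degree_monom_le)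
  moreover have "coeff P0 k = 0" by (simp add: P0_def L_def k_def)
  ultimately obtain C where C: "\<And>z. norm z \<ge> 1 \<Longrightarrow> norm (poly P0 z) * norm z \<le> C * norm z ^ k"
    using poly_bound_coeff0 by blast
  define Z where "Z = max 1 (2 * C / norm L)"
  show ?thesis
  proof (intro exI conjI allI impI)
    show "norm L / 2 > 0" using L by simp
    fix z :: complex assume z: "norm z \<ge> Z"
    have z1: "norm z \<ge> 1" using z by (simp add: Z_def)
    have zC: "norm z * norm L \<ge> 2 * C" using z L by (simp add: Z_def field_simps)
    have eq: "poly P z = L * z ^ k + poly P0 z" by (simp add: P0_def poly_monom)
    have "norm (L * z ^ k) \<le> norm (poly P z) + norm (poly P0 z)"
      using norm_triangle_ineq4[of "poly P z" "poly P0 z"] eq by simp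
    hence "norm L * norm z ^ k \<le> norm (poly P z) + norm (poly P0 z)" by (simp add: norm_mult norm_power)
    hence "norm L * norm z ^ k * norm z \<le> norm (poly P z) * norm z + C * norm z ^ k"
    proof -
      have "norm L * norm z ^ k * norm z \<le> (norm (poly P z) + norm (poly P0 z)) * norm z"
        by (rule mult_right_mono[OF \<open>norm L * norm z ^ k \<le> _\<close>]) simp
      also have "\<dots> = norm (poly P z) * norm z + norm (poly P0 z) * norm z" by (simp add: algebra_simps)
      finally show ?thesis using C[OF z1] by linarith
    qed
    moreover have "2 * C * norm z ^ k \<le> norm z * norm L * norm z ^ k"
      using zC by (intro mult_right_mono) auto
    ultimately have "norm L / 2 * norm z ^ k * norm z \<le> norm (poly P z) * norm z"
      by (simp add: algebra_simps)
    moreover have "0 < norm z" using z1 by linarith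
    ultimately have "norm L / 2 * norm z ^ k \<le> norm (poly P z)"
      by (rule mult_right_le_imp_le)
    then show "norm L / 2 * norm z ^ degree P \<le> norm (poly P z)" by (simp add: k_def)
  qed
qed

lemma coeff_mult_top:
  fixes A B :: "'a::comm_semiring_1 poly"
  assumes "degree A \<le> a" "degree B \<le> b"
  shows "coeff (A * B) (a + b) = coeff A a * coeff B b"
proof -
  have "coeff (A * B) (a + b) = (\<Sum>i\<le>a+b. coeff A i * coeff B (a + b - i))"
    by (simp add: coeff_mult)
  also have "\<dots> = (\<Sum>i\<in>{a}. coeff A i * coeff B (a + b - i))"
  proof (rule sum.mono_neutral_right)
    show "\<forall>i\<in>{..a + b} - {a}. coeff A i * coeff B (a + b - i) = 0"
    proof
      fix i assume i: "i \<in> {..a + b} - {a}"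
      show "coeff A i * coeff B (a + b - i) = 0"
      proof (cases "i < a")
        case True
        then have "coeff B (a + b - i) = 0" using assms(2) by (intro coeff_eq_0) auto
        then show ?thesis by simp
      next
        case False
        then have "coeff A i = 0" using i assms(1) by (intro coeff_eq_0) auto
        then show ?thesis by simp
      qed
    qed
  qed auto
  finally show ?thesis by simp
qed

lemma pderivX:
  fixes A :: "complex poly"
  assumes "degree A \<le> a"
  shows "degree (pCons 0 (pderiv A)) \<le> a \<and> coeff (pCons 0 (pderiv A)) a = of_nat a * coeff A a"
proof (cases a)
  case 0
  then have "pderiv A = 0" using assms by (simp add: pderiv_eq_0_iff)
  then show ?thesis using 0 by simp
next
  case (Suc k)
  have "degree (pderiv A) \<le> k"
    using assms Suc by (metis degree_pderiv diff_Suc_1 diff_le_mono)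
  then have "degree (pCons 0 (pderiv A)) \<le> a"
    using Suc by (metis Suc_le_mono degree_pCons_le le_trans)
  moreover have "coeff (pCons 0 (pderiv A)) a = of_nat a * coeff A a"
    using Suc by (simp add: coeff_pderiv)
  ultimately show ?thesis by blast
qed

lemma deg_mult_le': "degree A \<le> a \<Longrightarrow> degree B \<le> b \<Longrightarrow> degree (A * B) \<le> a + b"
  by (meson add_mono degree_mult_le le_trans)

definition XD :: "complex poly \<Rightarrow> complex poly" where "XD A = pCons 0 (pderiv A)"
definition Q2p :: "complex poly \<Rightarrow> complex poly" where "Q2p q = XD (XD q) - XD q"
definition Mp :: "complex poly \<Rightarrow> complex poly \<Rightarrow> complex \<Rightarrow> complex poly" where
  "Mp p q lam = - ((XD p * XD q - p * Q2p q) * (q + [:lam:]) * q) + smult lam (p * (1 - q) * (XD q * XD q))"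

lemma M_top:
  fixes p q :: "complex poly" and lam :: complex
  assumes dp: "degree p \<le> m" and dq: "degree q \<le> d" and d1: "d \<ge> 1" and lq: "coeff q d = 1"
    and lam: "lam * of_nat d = of_nat d - 1 - of_nat m"
  shows "degree (Mp p q lam) \<le> m + 3*d \<and> coeff (Mp p q lam) (m + 3*d) = 0"
proof -
  define Q1 where "Q1 = XD q"
  define P1 where "P1 = XD p"
  define Q2 where "Q2 = Q2p q"
  define M where "M = Mp p q lam"
  have M_def': "M = - ((P1*Q1 - p*Q2) * (q + [:lam:]) * q) + smult lam (p * (1 - q) * (Q1 * Q1))"
    by (simp add: M_def Mp_def P1_def Q1_def Q2_def)
  define L where "L = coeff p m"
  have P1: "degree P1 \<le> m" "coeff P1 m = of_nat m * L"
    using pderivX[OF dp] by (auto simp: P1_def L_def XD_def)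
  have Q1: "degree Q1 \<le> d" "coeff Q1 d = of_nat d"
    using pderivX[OF dq] lq by (auto simp: Q1_def XD_def)
  have Q1': "degree (XD Q1) \<le> d" "coeff (XD Q1) d = of_nat d * of_nat d"
    using pderivX[OF Q1(1)] Q1(2) by (auto simp: XD_def)
  have Q2: "degree Q2 \<le> d" "coeff Q2 d = of_nat d * of_nat d - of_nat d"
    using Q1 Q1' unfolding Q2_def Q2p_def Q1_def[symmetric] by (auto intro: degree_diff_le)
  have ql: "degree (q + [:lam:]) \<le> d" "coeff (q + [:lam:]) d = 1"
    using dq lq d1 by (auto intro: degree_add_le simp: coeff_pCons split: nat.splits)
  have q1m: "degree (1 - q) \<le> d" "coeff (1 - q) d = -1"
    using dq lq d1 by (auto intro: degree_diff_le)
  define A where "A = P1*Q1 - p*Q2"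
  have A: "degree A \<le> m + d" "coeff A (m + d) = of_nat m * L * of_nat d - L * (of_nat d * of_nat d - of_nat d)"
  proof -
    have 1: "degree (P1*Q1) \<le> m+d" by (rule deg_mult_le'[OF P1(1) Q1(1)])
    have 2: "degree (p*Q2) \<le> m+d" by (rule deg_mult_le'[OF dp Q2(1)])
    show "degree A \<le> m + d" unfolding A_def by (rule degree_diff_le[OF 1 2])
    show "coeff A (m + d) = of_nat m * L * of_nat d - L * (of_nat d * of_nat d - of_nat d)"
      unfolding A_def coeff_diff coeff_mult_top[OF P1(1) Q1(1)] coeff_mult_top[OF dp Q2(1)]
      using P1(2) Q1(2) Q2(2) by (simp add: L_def)
  qed
  have B: "degree (A * (q + [:lam:]) * q) \<le> m + 3 * d"
    "coeff (A * (q + [:lam:]) * q) (m + 3*d) = coeff A (m + d)"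
  proof -
    have 1: "degree (A * (q + [:lam:])) \<le> m + d + d" by (rule deg_mult_le'[OF A(1) ql(1)])
    have "degree (A * (q + [:lam:]) * q) \<le> m + d + d + d" by (rule deg_mult_le'[OF 1 dq])
    then show "degree (A * (q + [:lam:]) * q) \<le> m + 3 * d" by simp
    have "coeff (A * (q + [:lam:]) * q) (m + d + d + d) = coeff A (m + d)"
      using coeff_mult_top[OF 1 dq] coeff_mult_top[OF A(1) ql(1)] ql(2) lq by simp
    then show "coeff (A * (q + [:lam:]) * q) (m + 3*d) = coeff A (m + d)"
      by (simp add: numeral_3_eq_3 add.assoc)
  qed
  have C: "degree (p * (1 - q) * (Q1 * Q1)) \<le> m + 3 * d"
    "coeff (p * (1 - q) * (Q1 * Q1)) (m + 3*d) = - L * of_nat d * of_nat d"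
  proof -
    have 1: "degree (p * (1 - q)) \<le> m + d" by (rule deg_mult_le'[OF dp q1m(1)])
    have 2: "degree (Q1 * Q1) \<le> d + d" by (rule deg_mult_le'[OF Q1(1) Q1(1)])
    have "degree (p * (1 - q) * (Q1 * Q1)) \<le> m + d + (d + d)" by (rule deg_mult_le'[OF 1 2])
    then show "degree (p * (1 - q) * (Q1 * Q1)) \<le> m + 3 * d" by simp
    have "coeff (p * (1 - q) * (Q1 * Q1)) (m + d + (d + d)) = - L * of_nat d * of_nat d"
      using coeff_mult_top[OF 1 2] coeff_mult_top[OF dp q1m(1)] coeff_mult_top[OF Q1(1) Q1(1)] q1m(2) Q1(2)
      by (simp add: L_def)
    then show "coeff (p * (1 - q) * (Q1 * Q1)) (m + 3*d) = - L * of_nat d * of_nat d"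
      by (simp add: numeral_3_eq_3 add.assoc)
  qed
  have "degree M \<le> m + 3*d"
    unfolding M_def' A_def[symmetric] using B(1) C(1)
    by (intro degree_add_le) (auto intro: order_trans[OF degree_smult_le])
  moreover have "coeff M (m + 3*d) = 0"
  proof -
    have "coeff M (m + 3*d) = - (of_nat m * L * of_nat d - L * (of_nat d * of_nat d - of_nat d))
          + lam * (- L * of_nat d * of_nat d)"
      unfolding M_def' A_def[symmetric] using B(2) C(2) A(2) by simp
    also have "\<dots> = - L * of_nat d * (of_nat m - of_nat d + 1 + lam * of_nat d)"
      by (simp add: algebra_simps)
    also have "\<dots> = 0" using lam by simp
    finally show ?thesis .
  qed
  ultimately show ?thesis by (simp add: M_def)
qed

definition rr :: "complex poly \<Rightarrow> complex poly \<Rightarrow> complex \<Rightarrow> complex \<Rightarrow> complex" where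
  "rr p q lam z = - ((poly (pderiv p) z * poly (pderiv q) z - poly p z * poly (pderiv (pderiv q)) z)
      / (poly (pderiv q) z)^2) * (1 + lam / poly q z) + lam * poly p z / (poly q z)^2 - lam * poly p z / poly q z"

definition FF :: "complex poly \<Rightarrow> complex poly \<Rightarrow> complex \<Rightarrow> complex \<Rightarrow> complex" where
  "FF p q lam z = poly p z / poly (pderiv q) z * (1 + lam / poly q z) * exp (poly q z)"

lemma poly_XD: "poly (XD A) z = z * poly (pderiv A) z"
  by (simp add: XD_def)

lemma poly_Q2p: "poly (Q2p q) z = z^2 * poly (pderiv (pderiv q)) z"
  by (simp add: Q2p_def XD_def pderiv_pCons algebra_simps power2_eq_square)

lemma rr_Mp:
  assumes "z \<noteq> 0" "poly (pderiv q) z \<noteq> 0" "poly q z \<noteq> 0"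
  shows "rr p q lam z = poly (Mp p q lam) z / ((poly (XD q) z)^2 * (poly q z)^2)"
  using assms
  by (simp add: rr_def Mp_def poly_XD poly_Q2p field_simps power2_eq_square)

lemma FF_deriv:
  assumes "poly (pderiv q) z \<noteq> 0" "poly q z \<noteq> 0"
  shows "(FF p q lam has_field_derivative exp (poly q z) * (poly p z - rr p q lam z)) (at z)"
  unfolding FF_def
  apply (rule derivative_eq_intros refl assms)+
  using assms apply (simp add: rr_def field_simps power2_eq_square)
  done

lemma powr_compar:
  fixes x y K e :: real
  assumes "0 < x" "0 < y" "1 \<le> K" "x \<le> K * y" "y \<le> K * x"
  shows "x powr e \<le> K powr \<bar>e\<bar> * y powr e"
proof (cases "e \<ge> 0")
  case True
  have "x powr e \<le> (K * y) powr e" using assms True by (intro powr_mono2) auto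
  also have "\<dots> = K powr \<bar>e\<bar> * y powr e" using True assms by (simp add: powr_mult)
  finally show ?thesis .
next
  case False
  have "y / K \<le> x" using assms by (simp add: field_simps)
  then have "x powr e \<le> (y / K) powr e" using assms False by (intro powr_mono2') auto
  also have "\<dots> = K powr \<bar>e\<bar> * y powr e" using False assms
    by (simp add: powr_divide powr_minus field_simps)
  finally show ?thesis .
qed

lemma bounded_on_compact:
  fixes f :: "complex \<Rightarrow> real"
  assumes "compact K" "continuous_on K f"
  shows "\<exists>B. \<forall>z\<in>K. f z \<le> B"
proof -
  have "bounded (f ` K)" by (intro compact_imp_bounded compact_continuous_image assms)
  then obtain B where "\<forall>x\<in>f ` K. norm x \<le> B" by (auto simp: bounded_iff)
  then show ?thesis by (intro exI[of _ B]) auto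
qed

locale L =
  fixes p q :: "complex poly" and m d :: nat and R :: real
  assumes dp: "degree p = m" and lp: "lead_coeff p = of_nat d"
    and dq: "degree q = d" and d1: "d \<ge> 1" and lq: "lead_coeff q = 1"
    and Rpos: "R > 0"
    and crit: "\<And>z. poly (pderiv q) z = 0 \<Longrightarrow> poly q z \<in> ball 0 R"
    and growth: "\<And>z. norm z \<ge> (1/2) * R powr (1 / real d) \<Longrightarrow>
           (1/2) ^ d * norm z ^ d \<le> norm (poly q z) \<and> norm (poly q z) \<le> 2 ^ d * norm z ^ d"
begin

definition lam :: complex where "lam = (of_nat d - 1 - of_nat m) / of_nat d"
definition a :: real where "a = (real m - 2 * real d) / real d"
definition hh :: real where "hh = R + 1"
definition rho0 :: real where "rho0 = (1/2) * R powr (1 / real d)"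

lemma lam_d: "lam * of_nat d = of_nat d - 1 - of_nat m"
  using d1 by (simp add: lam_def)

lemma p_nz: "p \<noteq> 0" using lp d1 by auto
lemma lcp: "coeff p m = of_nat d" using lp dp by simp
lemma lcq: "coeff q d = 1" using lq dq by simp

lemma q1_nz: "norm (poly q z) \<ge> R \<Longrightarrow> poly (pderiv q) z \<noteq> 0"
  using crit[of z] by auto

lemma XDq_deg: "degree (XD q) = d"
proof -
  have "degree (XD q) \<le> d" "coeff (XD q) d = of_nat d"
    using pderivX[of q d] dq lcq by (auto simp: XD_def)
  moreover then have "degree (XD q) \<ge> d" using d1 by (intro le_degree) auto
  ultimately show ?thesis by simp
qed

lemma XDq_nz: "XD q \<noteq> 0"
  using XDq_deg d1 by auto

lemma XDq_upper: "\<exists>C. \<forall>z. norm z \<ge> 1 \<longrightarrow> norm (poly (XD q) z) \<le> C * norm z ^ d"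
  using poly_bound_upper[of "XD q" d] XDq_deg by simp

lemma XDq_lower: "\<exists>c Z. c > 0 \<and> (\<forall>z. norm z \<ge> Z \<longrightarrow> norm (poly (XD q) z) \<ge> c * norm z ^ d)"
  using poly_bound_lower[OF XDq_nz] XDq_deg by simp

lemma M_bound: "\<exists>C. \<forall>z. norm z \<ge> 1 \<longrightarrow> norm (poly (Mp p q lam) z) * norm z \<le> C * norm z ^ (m + 3*d)"
  using M_top[of p m q d lam] dp dq d1 lcq lam_d by (intro poly_bound_coeff0) auto

lemma q_low: "norm z \<ge> rho0 \<Longrightarrow> (1/2)^d * norm z ^ d \<le> norm (poly q z)"
  using growth[of z] by (simp add: rho0_def)
lemma q_up: "norm z \<ge> rho0 \<Longrightarrow> norm (poly q z) \<le> 2^d * norm z ^ d"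
  using growth[of z] by (simp add: rho0_def)

end

context L begin

lemma rr_div_eq:
  assumes "z \<noteq> 0" "poly (pderiv q) z \<noteq> 0" "poly q z \<noteq> 0"
  shows "rr p q lam z / poly (pderiv q) z = poly (Mp p q lam) z * z / ((poly (XD q) z)^3 * (poly q z)^2)"
  using assms by (simp add: rr_Mp poly_XD field_simps power2_eq_square power3_eq_cube)

lemma pow_ratio_powr:
  assumes "t > 0"
  shows "t ^ (m + 3*d) / t ^ (5*d) = (t ^ d) powr a"
proof -
  have e1: "t ^ (m + 3*d) = t powr (real (m + 3*d))" using powr_realpow[OF assms, of "m+3*d"] by simp
  have e2: "t ^ (5*d) = t powr (real (5*d))" using powr_realpow[OF assms, of "5*d"] by simp
  have "t ^ (m + 3*d) / t ^ (5*d) = t powr (real (m + 3*d)) / t powr (real (5*d))"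
    by (simp only: e1 e2)
  also have "\<dots> = t powr (real m - 2 * real d)" using assms by (simp add: powr_diff[symmetric] algebra_simps)
  also have "\<dots> = (t powr real d) powr a" using d1 by (simp add: powr_powr a_def)
  also have "\<dots> = (t ^ d) powr a" using assms by (simp add: powr_realpow)
  finally show ?thesis .
qed

lemma B_large: "\<exists>C Z. \<forall>z. norm z \<ge> Z \<longrightarrow> norm (rr p q lam z / poly (pderiv q) z) \<le> C * norm (poly q z) powr a"
proof -
  obtain CM where CM: "\<And>z. norm z \<ge> 1 \<Longrightarrow> norm (poly (Mp p q lam) z) * norm z \<le> CM * norm z ^ (m + 3*d)"
    using M_bound by blast
  obtain cQ ZQ where cQ: "cQ > 0" "\<And>z. norm z \<ge> ZQ \<Longrightarrow> norm (poly (XD q) z) \<ge> cQ * norm z ^ d"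
    using XDq_lower by blast
  have CM0: "CM \<ge> 0" using CM[of 1] by simp (meson norm_ge_zero order_trans)
  define Z where "Z = max (max 1 ZQ) rho0"
  define D where "D = cQ ^ 3 * (1/2) ^ (2*d)"
  have D: "D > 0" using cQ by (simp add: D_def)
  show ?thesis
  proof (intro exI allI impI)
    fix z :: complex assume z: "norm z \<ge> Z"
    define t where "t = norm z"
    have t1: "t \<ge> 1" and tQ: "t \<ge> ZQ" and tr: "t \<ge> rho0" using z by (auto simp: Z_def t_def)
    have tpos: "t > 0" using t1 by simp
    have XD: "norm (poly (XD q) z) \<ge> cQ * t ^ d" using cQ(2)[of z] tQ by (simp add: t_def)
    have XDpos: "norm (poly (XD q) z) > 0" using XD cQ tpos by (meson less_le_trans mult_pos_pos zero_less_power)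
    have ql: "(1/2)^d * t ^ d \<le> norm (poly q z)" using q_low[of z] tr by (simp add: t_def)
    have qpos: "norm (poly q z) > 0" using ql tpos by (meson less_le_trans mult_pos_pos zero_less_power zero_less_divide_1_iff zero_less_numeral)
    have qu: "norm (poly q z) \<le> 2^d * t ^ d" using q_up[of z] tr by (simp add: t_def)
    have z0: "z \<noteq> 0" using tpos by (auto simp: t_def)
    have q10: "poly (pderiv q) z \<noteq> 0" using XDpos by (auto simp: poly_XD)
    have q0: "poly q z \<noteq> 0" using qpos by auto
    have den: "D * t ^ (5*d) \<le> norm (poly (XD q) z) ^ 3 * norm (poly q z) ^ 2"
    proof -
      have "D * t ^ (5*d) = (cQ * t ^ d) ^ 3 * ((1/2)^d * t ^ d) ^ 2"
        by (simp add: D_def power_mult_distrib power_add[symmetric] power_mult[symmetric] algebra_simps)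
      also have "\<dots> \<le> norm (poly (XD q) z) ^ 3 * norm (poly q z) ^ 2"
        using XD ql cQ tpos by (intro mult_mono power_mono) auto
      finally show ?thesis .
    qed
    have "norm (rr p q lam z / poly (pderiv q) z)
          = norm (poly (Mp p q lam) z) * t / (norm (poly (XD q) z) ^ 3 * norm (poly q z) ^ 2)"
      by (simp add: rr_div_eq[OF z0 q10 q0] norm_mult norm_divide norm_power t_def)
    also have "\<dots> \<le> CM * t ^ (m + 3*d) / (D * t ^ (5*d))"
    proof (rule frac_le)
      show "0 \<le> CM * t ^ (m + 3*d)" using CM0 tpos by simp
      show "norm (poly (Mp p q lam) z) * t \<le> CM * t ^ (m + 3*d)" using CM[of z] t1 by (simp add: t_def)
      show "0 < D * t ^ (5*d)" using D tpos by simp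
      show "D * t ^ (5*d) \<le> norm (poly (XD q) z) ^ 3 * norm (poly q z) ^ 2" by (rule den)
    qed
    also have "\<dots> = CM / D * (t ^ (m + 3*d) / t ^ (5*d))" by simp
    also have "\<dots> = CM / D * (t ^ d) powr a" using tpos by (simp add: pow_ratio_powr)
    also have "\<dots> \<le> CM / D * ((2^d) powr \<bar>a\<bar> * norm (poly q z) powr a)"
    proof (rule mult_left_mono)
      show "(t ^ d) powr a \<le> (2^d) powr \<bar>a\<bar> * norm (poly q z) powr a"
      proof (rule powr_compar)
        have "2^d * ((1/2)^d * t ^ d) \<le> 2^d * norm (poly q z)" using ql by (intro mult_left_mono) auto
        moreover have "2^d * ((1/2)^d * t ^ d) = (t ^ d :: real)"
          by (simp add: mult.assoc[symmetric] power_mult_distrib[symmetric])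
        ultimately show "t ^ d \<le> 2^d * norm (poly q z)" by simp
      qed (use tpos qpos qu in auto)
      show "0 \<le> CM / D" using CM0 D by simp
    qed
    finally show "norm (rr p q lam z / poly (pderiv q) z) \<le> (CM / D * (2^d) powr \<bar>a\<bar>) * norm (poly q z) powr a"
      by (simp add: mult_ac)
  qed
qed

end

context L begin

lemma hh_gt: "hh > R" "hh \<ge> 1" using Rpos by (auto simp: hh_def)

lemma B_all: "\<exists>C. \<forall>z. norm (poly q z) \<ge> hh \<longrightarrow> norm (rr p q lam z / poly (pderiv q) z) \<le> C * norm (poly q z) powr a"
proof -
  obtain C1 Z where C1: "\<And>z. norm z \<ge> Z \<Longrightarrow> norm (rr p q lam z / poly (pderiv q) z) \<le> C1 * norm (poly q z) powr a"
    using B_large by blast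
  define K where "K = cball 0 Z \<inter> {z. hh \<le> norm (poly q z)}"
  have Kq: "poly q z \<noteq> 0" "poly (pderiv q) z \<noteq> 0" if "z \<in> K" for z
    using that hh_gt q1_nz[of z] by (auto simp: K_def)
  have cK: "compact K" unfolding K_def
    by (intro compact_Int_closed compact_cball closed_Collect_le continuous_intros)
  have cf: "continuous_on K (\<lambda>z. norm (rr p q lam z / poly (pderiv q) z) / norm (poly q z) powr a)"
    unfolding rr_def using Kq by (intro continuous_intros) auto
  obtain B where B0: "\<forall>z\<in>K. norm (rr p q lam z / poly (pderiv q) z) / norm (poly q z) powr a \<le> B"
    using bounded_on_compact[OF cK cf] by blast
  have B: "\<And>z. z \<in> K \<Longrightarrow> norm (rr p q lam z / poly (pderiv q) z) / norm (poly q z) powr a \<le> B"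
    using B0 by blast
  show ?thesis
  proof (intro exI[of _ "max C1 B"] allI impI)
    fix z assume z: "norm (poly q z) \<ge> hh"
    have pos: "norm (poly q z) powr a > 0" using z hh_gt by auto
    show "norm (rr p q lam z / poly (pderiv q) z) \<le> max C1 B * norm (poly q z) powr a"
    proof (cases "norm z \<ge> Z")
      case True
      have "C1 * norm (poly q z) powr a \<le> max C1 B * norm (poly q z) powr a"
        using pos by (intro mult_right_mono) auto
      then show ?thesis using C1[OF True] by linarith
    next
      case False
      then have "z \<in> K" using z by (auto simp: K_def)
      then have "norm (rr p q lam z / poly (pderiv q) z) \<le> B * norm (poly q z) powr a"
        using B[of z] pos by (simp add: divide_le_eq)
      moreover have "B * norm (poly q z) powr a \<le> max C1 B * norm (poly q z) powr a"
        using pos by (intro mult_right_mono) auto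
      ultimately show ?thesis by linarith
    qed
  qed
qed

lemma D_lower: "\<exists>c Z. c > 0 \<and> (\<forall>z. norm z \<ge> Z \<longrightarrow>
    norm (poly p z / poly (pderiv q) z) \<ge> c * norm (poly q z) powr (a + 1 + 1 / real d))"
proof -
  obtain cp Zp where cp: "cp > 0" "\<And>z. norm z \<ge> Zp \<Longrightarrow> norm (poly p z) \<ge> cp * norm z ^ m"
    using poly_bound_lower[OF p_nz] dp by auto
  obtain CQ0 where CQ0: "\<And>z. norm z \<ge> 1 \<Longrightarrow> norm (poly (XD q) z) \<le> CQ0 * norm z ^ d"
    using XDq_upper by blast
  define CQ where "CQ = max CQ0 1"
  have CQ: "CQ > 0" "\<And>z. norm z \<ge> 1 \<Longrightarrow> norm (poly (XD q) z) \<le> CQ * norm z ^ d"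
  proof -
    show "CQ > 0" by (simp add: CQ_def)
    fix z :: complex assume "norm z \<ge> 1"
    show "norm (poly (XD q) z) \<le> CQ * norm z ^ d"
      by (rule order_trans[OF CQ0[OF \<open>norm z \<ge> 1\<close>]]) (simp add: CQ_def mult_right_mono)
  qed
  obtain cQ ZQ where cQ: "cQ > 0" "\<And>z. norm z \<ge> ZQ \<Longrightarrow> norm (poly (XD q) z) \<ge> cQ * norm z ^ d"
    using XDq_lower by blast
  define e where "e = a + 1 + 1 / real d"
  have e: "e = (real m + 1 - real d) / real d" using d1 by (simp add: e_def a_def field_simps)
  define Z where "Z = max (max 1 Zp) (max ZQ rho0)"
  have cpos: "cp / CQ / (2^d) powr \<bar>e\<bar> > 0" using cp CQ by simp
  have main: "cp / CQ / (2^d) powr \<bar>e\<bar> * norm (poly q z) powr e \<le> norm (poly p z / poly (pderiv q) z)"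
    if z: "norm z \<ge> Z" for z
  proof -
    define t where "t = norm z"
    have t1: "t \<ge> 1" and tp: "t \<ge> Zp" and tQ: "t \<ge> ZQ" and tr: "t \<ge> rho0" using z by (auto simp: Z_def t_def)
    have tpos: "t > 0" using t1 by simp
    have "cQ * t ^ d > 0" using cQ(1) tpos by simp
    then have XDpos: "norm (poly (XD q) z) > 0" using cQ(2)[of z] tQ unfolding t_def by linarith
    have q1eq: "norm (poly (pderiv q) z) = norm (poly (XD q) z) / t" using tpos by (simp add: poly_XD norm_mult t_def)
    have q1pos: "norm (poly (pderiv q) z) > 0" using XDpos tpos q1eq by simp
    have q1up: "norm (poly (pderiv q) z) \<le> CQ * t ^ d / t" unfolding q1eq
      using CQ(2)[of z] t1 tpos by (intro divide_right_mono) (auto simp: t_def)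
    have pl: "norm (poly p z) \<ge> cp * t ^ m" using cp(2)[of z] tp by (simp add: t_def)
    have ql: "(1/2)^d * t ^ d \<le> norm (poly q z)" using q_low[of z] tr by (simp add: t_def)
    have "(1/2)^d * t ^ d > 0" using tpos by simp
    then have qpos: "norm (poly q z) > 0" using ql by linarith
    have qu: "norm (poly q z) \<le> 2^d * t ^ d" using q_up[of z] tr by (simp add: t_def)
    have "cp * t ^ m / (CQ * t ^ d / t) \<le> norm (poly p z) / norm (poly (pderiv q) z)"
      by (rule frac_le) (use pl q1up q1pos cp tpos CQ in auto)
    moreover have "cp * t ^ m / (CQ * t ^ d / t) = cp / CQ * (t ^ d) powr e"
    proof -
      have "cp * t ^ m / (CQ * t ^ d / t) = cp / CQ * (t ^ Suc m / t ^ d)" using tpos CQ by (simp add: field_simps)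
      also have "t ^ Suc m / t ^ d = t powr (real (Suc m)) / t powr (real d)" using tpos by (simp only: powr_realpow)
      also have "\<dots> = t powr (real m + 1 - real d)" using tpos by (simp add: powr_diff[symmetric] algebra_simps)
      also have "\<dots> = (t powr real d) powr e" using d1 by (simp add: powr_powr e)
      also have "\<dots> = (t ^ d) powr e" using tpos by (simp add: powr_realpow)
      finally show ?thesis by simp
    qed
    moreover have "norm (poly q z) powr e \<le> (2^d) powr \<bar>e\<bar> * (t ^ d) powr e"
    proof (rule powr_compar)
      have "2^d * ((1/2)^d * t ^ d) \<le> 2^d * norm (poly q z)" using ql by (intro mult_left_mono) auto
      moreover have "2^d * ((1/2)^d * t ^ d) = (t ^ d :: real)"
        by (simp add: mult.assoc[symmetric] power_mult_distrib[symmetric])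
      ultimately show "t ^ d \<le> 2^d * norm (poly q z)" by simp
    qed (use tpos qpos qu in auto)
    ultimately have A: "cp / CQ * (t ^ d) powr e \<le> norm (poly p z / poly (pderiv q) z)"
      and Cc: "norm (poly q z) powr e \<le> (2^d) powr \<bar>e\<bar> * (t ^ d) powr e"
      by (simp_all add: norm_divide)
    have Kpos: "((2::real)^d) powr \<bar>e\<bar> > 0" by simp
    have "norm (poly q z) powr e / (2^d) powr \<bar>e\<bar> \<le> (t ^ d) powr e"
      using Cc Kpos by (simp add: divide_le_eq mult.commute)
    then have "cp / CQ * (norm (poly q z) powr e / (2^d) powr \<bar>e\<bar>) \<le> cp / CQ * (t ^ d) powr e"
      using cp CQ by (intro mult_left_mono) auto
    then show ?thesis using A by simp
  qed
  show ?thesis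
    by (rule exI[of _ "cp / CQ / (2^d) powr \<bar>e\<bar>"], rule exI[of _ Z]) (use cpos main in \<open>simp add: e_def\<close>)
qed

end

lemma poly_holo: "poly q holomorphic_on S"
  unfolding holomorphic_on_def field_differentiable_def
  using poly_DERIV by (blast intro: has_field_derivative_at_within)

lemma poly_surj:
  fixes q :: "complex poly"
  assumes "degree q \<ge> 1"
  shows "\<exists>z. poly q z = w"
proof -
  have "degree (q + [:-w:]) = degree q" using assms by (intro degree_add_eq_left) auto
  then have "\<not> constant (poly (q + [:-w:]))" using assms by (simp add: constant_degree)
  then obtain z where "poly (q + [:-w:]) z = 0" using fundamental_theorem_of_algebra by blast
  then show ?thesis by auto
qed

lemma poly_preimage_bounded:
  fixes q :: "complex poly"
  assumes "degree q \<ge> 1"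
  shows "bounded {z. norm (poly q z - w0) \<le> 1}"
proof -
  have q0: "q \<noteq> 0" using assms by auto
  obtain c Z where c: "c > 0" "\<And>z. norm z \<ge> Z \<Longrightarrow> norm (poly q z) \<ge> c * norm z ^ degree q"
    using poly_bound_lower[OF q0] by blast
  define B where "B = max (max Z 1) ((norm w0 + 1) / c + 1)"
  have "{z. norm (poly q z - w0) \<le> 1} \<subseteq> cball 0 B"
  proof
    fix z assume z: "z \<in> {z. norm (poly q z - w0) \<le> 1}"
    show "z \<in> cball 0 B"
    proof (rule ccontr)
      assume "z \<notin> cball 0 B"
      then have zB: "norm z > B" by auto
      then have z1: "norm z \<ge> 1" "norm z \<ge> Z" by (auto simp: B_def)
      have "norm z \<le> norm z ^ degree q" using z1 assms by (intro self_le_power) auto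
      then have "c * norm z \<le> c * norm z ^ degree q" using c by simp
      also have "\<dots> \<le> norm (poly q z)" using c(2) z1 by simp
      also have "\<dots> \<le> norm w0 + 1" using z norm_triangle_ineq2[of "poly q z" w0] by simp
      finally have "norm z \<le> (norm w0 + 1) / c" using c by (simp add: field_simps)
      then show False using zB by (simp add: B_def)
    qed
  qed
  then show ?thesis using bounded_cball bounded_subset by blast
qed

lemma finite_min_radius:
  fixes Z :: "complex set"
  assumes "finite Z" "\<And>z. z \<in> Z \<Longrightarrow> rf z > 0"
  shows "\<exists>r>0. (\<forall>z\<in>Z. r \<le> rf z) \<and> (\<forall>z1\<in>Z. \<forall>z2\<in>Z. z1 \<noteq> z2 \<longrightarrow> 2 * r \<le> dist z1 z2)"
proof -
  define DS where "DS = (\<lambda>(z1, z2). dist z1 z2 / 2) ` {(z1, z2). z1 \<in> Z \<and> z2 \<in> Z \<and> z1 \<noteq> z2}"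
  define A where "A = insert 1 (rf ` Z \<union> DS)"
  have fin: "finite A" unfolding A_def DS_def using assms(1)
    by (intro finite_insert[THEN iffD2] finite_UnI finite_imageI) (auto intro: finite_subset[of _ "Z \<times> Z"])
  have pos: "\<forall>x\<in>A. x > 0" using assms(2) by (auto simp: A_def DS_def)
  define r where "r = Min A"
  have "r > 0" using fin pos by (simp add: r_def A_def)
  moreover have "\<forall>z\<in>Z. r \<le> rf z" using fin by (auto simp: r_def A_def)
  moreover have "\<forall>z1\<in>Z. \<forall>z2\<in>Z. z1 \<noteq> z2 \<longrightarrow> 2 * r \<le> dist z1 z2"
  proof (intro ballI impI)
    fix z1 z2 assume "z1 \<in> Z" "z2 \<in> Z" "z1 \<noteq> z2"
    then have "dist z1 z2 / 2 \<in> A" by (auto simp: A_def DS_def image_iff)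
    then have "r \<le> dist z1 z2 / 2" unfolding r_def by (rule Min_le[OF fin])
    then show "2 * r \<le> dist z1 z2" by simp
  qed
  ultimately show ?thesis by blast
qed

lemma poly_covering:
  fixes q :: "complex poly" and G :: "complex set"
  assumes G: "open G" and dq: "degree q \<ge> 1"
    and nc: "\<And>z. poly q z \<in> G \<Longrightarrow> poly (pderiv q) z \<noteq> 0"
  shows "covering_space (poly q -` G) (poly q) G"
proof (rule covering_spaceI)
  show "continuous_on (poly q -` G) (poly q)" by (intro continuous_intros)
  show "poly q ` (poly q -` G) = G" using poly_surj[OF dq] by (auto simp: image_iff) metis
next
  fix w0 assume w0: "w0 \<in> G"
  define C where "C = poly q -` G"
  define Z where "Z = {z. poly q z = w0}"
  have q0: "q + [:-w0:] \<noteq> 0"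
  proof
    assume "q + [:-w0:] = 0"
    then have "degree (q + [:-w0:]) = 0" by simp
    moreover have "degree (q + [:-w0:]) = degree q" using dq by (intro degree_add_eq_left) auto
    ultimately show False using dq by simp
  qed
  have finZ: "finite Z" using poly_roots_finite[OF q0] by (simp add: Z_def)
  have "\<exists>r>0. inj_on (poly q) (ball z r)" if "z \<in> Z" for z
  proof -
    have "poly (pderiv q) z \<noteq> 0" using nc w0 that by (auto simp: Z_def)
    moreover have "deriv (poly q) z = poly (pderiv q) z" by (rule DERIV_imp_deriv[OF poly_DERIV])
    ultimately obtain r where "r > 0" "ball z r \<subseteq> UNIV" "inj_on (poly q) (ball z r)"
      using has_complex_derivative_locally_injective[of "poly q" UNIV z] poly_holo by auto
    then show ?thesis by blast
  qed
  then obtain rf where rf: "\<And>z. z \<in> Z \<Longrightarrow> rf z > 0 \<and> inj_on (poly q) (ball z (rf z))" by metis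
  obtain r where r: "r > 0" "\<And>z. z \<in> Z \<Longrightarrow> r \<le> rf z"
    "\<And>z1 z2. z1 \<in> Z \<Longrightarrow> z2 \<in> Z \<Longrightarrow> z1 \<noteq> z2 \<Longrightarrow> 2 * r \<le> dist z1 z2"
    using finite_min_radius[OF finZ, of rf] rf by blast
  have inj: "inj_on (poly q) (ball z r)" if "z \<in> Z" for z
    using rf[OF that] r(2)[OF that] by (meson inj_on_subset subset_ball)
  have disj: "ball z1 r \<inter> ball z2 r = {}" if "z1 \<in> Z" "z2 \<in> Z" "z1 \<noteq> z2" for z1 z2
  proof (rule ccontr)
    assume "ball z1 r \<inter> ball z2 r \<noteq> {}"
    then obtain y where "dist z1 y < r" "dist z2 y < r" by auto
    then have "dist z1 z2 < 2 * r" by (smt (verit) dist_commute dist_triangle)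
    then show False using r(3)[OF that] by simp
  qed
  have openim: "open (poly q ` ball z r)" if "z \<in> Z" for z
    by (rule open_mapping_thm3) (auto intro: poly_holo inj that)
  define Kc where "Kc = {z. norm (poly q z - w0) \<le> 1} - (\<Union>z\<in>Z. ball z r)"
  have cKc: "compact Kc"
  proof -
    have "closed Kc" unfolding Kc_def
      by (intro closed_Diff closed_Collect_le continuous_intros open_UN) auto
    moreover have "bounded Kc" unfolding Kc_def
      using poly_preimage_bounded[OF dq, of w0] by (rule bounded_subset) auto
    ultimately show ?thesis by (simp add: compact_eq_bounded_closed)
  qed
  obtain eps where eps: "eps > 0" "\<And>z. norm (poly q z - w0) < eps \<Longrightarrow> z \<in> (\<Union>z\<in>Z. ball z r)"
  proof (cases "Kc = {}")
    case True
    show ?thesis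
    proof (rule that[of 1])
      fix z assume "norm (poly q z - w0) < 1"
      then have "z \<in> {z. norm (poly q z - w0) \<le> 1}" by simp
      moreover have "{z. norm (poly q z - w0) \<le> 1} \<subseteq> (\<Union>z\<in>Z. ball z r)" using True by (auto simp: Kc_def)
      ultimately show "z \<in> (\<Union>z\<in>Z. ball z r)" by blast
    qed simp
  next
    case False
    obtain x where x: "x \<in> Kc" "\<And>y. y \<in> Kc \<Longrightarrow> norm (poly q x - w0) \<le> norm (poly q y - w0)"
    proof -
      have "continuous_on Kc (\<lambda>z. norm (poly q z - w0))" by (intro continuous_intros)
      from continuous_attains_inf[OF cKc False this] show ?thesis using that by blast
    qed
    have "norm (poly q x - w0) > 0"
    proof (rule ccontr)
      assume "\<not> norm (poly q x - w0) > 0"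
      then have "x \<in> Z" by (simp add: Z_def)
      then show False using x(1) r(1) by (auto simp: Kc_def)
    qed
    show ?thesis
    proof (rule that[of "norm (poly q x - w0)"])
      fix z assume z: "norm (poly q z - w0) < norm (poly q x - w0)"
      show "z \<in> (\<Union>z\<in>Z. ball z r)"
      proof (rule ccontr)
        assume "z \<notin> (\<Union>z\<in>Z. ball z r)"
        moreover have "norm (poly q x - w0) \<le> 1" using x(1) by (simp add: Kc_def)
        ultimately have "z \<in> Kc" using z by (simp add: Kc_def)
        then show False using x(2)[of z] z by simp
      qed
    qed fact
  qed
  define T where "T = ball w0 eps \<inter> G \<inter> (\<Inter>z\<in>Z. poly q ` ball z r)"
  have openT: "open T" unfolding T_def using finZ openim G by (intro open_Int open_INT) auto
  have "w0 \<in> poly q ` ball z r" if "z \<in> Z" for z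
    using that r(1) by (auto simp: Z_def image_iff intro!: bexI[of _ z])
  then have w0T: "w0 \<in> T" using eps w0 by (auto simp: T_def)
  define v where "v = (\<lambda>z. ball z r \<inter> poly q -` T) ` Z"
  show "\<exists>T. w0 \<in> T \<and> openin (top_of_set G) T \<and>
          (\<exists>v. \<Union>v = poly q -` G \<inter> poly q -` T \<and> (\<forall>u\<in>v. openin (top_of_set (poly q -` G)) u) \<and>
               pairwise disjnt v \<and> (\<forall>u\<in>v. \<exists>qq. homeomorphism u T (poly q) qq))"
  proof (intro exI[of _ T] conjI exI[of _ v] ballI)
    show "w0 \<in> T" by (rule w0T)
    show "openin (top_of_set G) T" using openT by (intro open_subset) (auto simp: T_def)
    show "\<Union>v = poly q -` G \<inter> poly q -` T"
    proof
      show "\<Union>v \<subseteq> poly q -` G \<inter> poly q -` T" by (auto simp: v_def T_def)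
      show "poly q -` G \<inter> poly q -` T \<subseteq> \<Union>v"
      proof
        fix y assume y: "y \<in> poly q -` G \<inter> poly q -` T"
        then have "norm (poly q y - w0) < eps" by (auto simp: T_def dist_norm norm_minus_commute)
        then obtain z where "z \<in> Z" "y \<in> ball z r" using eps(2) by blast
        then show "y \<in> \<Union>v" using y by (auto simp: v_def)
      qed
    qed
    fix u assume u: "u \<in> v"
    then obtain z where z: "z \<in> Z" and uz: "u = ball z r \<inter> poly q -` T" by (auto simp: v_def)
    have openu: "open u" unfolding uz using openT by (intro open_Int open_vimage continuous_intros) auto
    show "openin (top_of_set (poly q -` G)) u" using openu by (intro open_subset) (auto simp: uz T_def)
    have "inj_on (poly q) u" using inj[OF z] by (rule inj_on_subset) (auto simp: uz)
    then obtain g where g: "homeomorphism u (poly q ` u) (poly q) g"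
    proof -
      have "continuous_on u (poly q)" by (intro continuous_intros)
      then show ?thesis using invariance_of_domain_homeomorphism[OF openu, of "poly q"] that \<open>inj_on (poly q) u\<close> by auto
    qed
    have "poly q ` u = T"
    proof
      show "poly q ` u \<subseteq> T" by (auto simp: uz)
      show "T \<subseteq> poly q ` u"
      proof
        fix w assume w: "w \<in> T"
        then have "w \<in> poly q ` ball z r" using z by (auto simp: T_def)
        then obtain y where "y \<in> ball z r" "w = poly q y" by auto
        then show "w \<in> poly q ` u" using w by (auto simp: uz)
      qed
    qed
    then show "\<exists>qq. homeomorphism u T (poly q) qq" using g by auto
  next
    show "pairwise disjnt v"
      unfolding pairwise_def disjnt_def v_def using disj by blast
  qed
qed

lemma slitG_iff: "w \<in> slitG R \<longleftrightarrow> norm w > R \<and> \<not> (Im w = 0 \<and> Re w \<ge> 0)"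
proof -
  have "w \<in> {complex_of_real x |x. x \<ge> 0} \<longleftrightarrow> Im w = 0 \<and> Re w \<ge> 0"
    by (auto simp: complex_eq_iff intro!: exI[of _ "Re w"])
  then show ?thesis by (auto simp: slitG_def)
qed

lemma open_slitG: "open (slitG R)"
proof -
  have "{complex_of_real x |x. x \<ge> 0} = complex_of_real ` {0..}" by auto
  then have "closed {complex_of_real x |x. (x::real) \<ge> 0}" using closed_slot_right by simp
  then show ?thesis unfolding slitG_def by (intro open_Compl closed_Un) auto
qed

lemma simply_connected_slitG:
  assumes R: "R > 0"
  shows "simply_connected (slitG R)"
proof -
  define Sg where "Sg = {z. Re z > ln R} \<inter> {z. Im z < pi} \<inter> {z. Im z > -pi}"
  have "convex Sg" unfolding Sg_def
    by (intro convex_Int convex_halfspace_Re_gt convex_halfspace_Im_lt convex_halfspace_Im_gt)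
  then have sc: "simply_connected Sg" by (rule convex_imp_simply_connected)
  have "homeomorphism Sg (slitG R) (\<lambda>z. - exp z) (\<lambda>w. Ln (- w))"
  proof (rule homeomorphismI)
    show "continuous_on Sg (\<lambda>z. - exp z)" by (intro continuous_intros)
    show "continuous_on (slitG R) (\<lambda>w. Ln (- w))"
      by (intro continuous_intros) (auto simp: slitG_iff complex_nonpos_Reals_iff)
    show "(\<lambda>z. - exp z) ` Sg \<subseteq> slitG R"
    proof
      fix w assume "w \<in> (\<lambda>z. - exp z) ` Sg"
      then obtain z where z: "z \<in> Sg" "w = - exp z" by auto
      have "norm w = exp (Re z)" using z by (simp add: norm_exp_eq_Re)
      also have "\<dots> > exp (ln R)" using z by (simp add: Sg_def)
      finally have nw: "norm w > R" using R by simp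
      have "\<not> (Im w = 0 \<and> Re w \<ge> 0)"
      proof
        assume "Im w = 0 \<and> Re w \<ge> 0"
        then have "sin (Im z) = 0" "cos (Im z) \<le> 0" using z by (auto simp: Im_exp Re_exp mult_le_0_iff)
        moreover have "\<bar>Im z\<bar> < pi" using z by (auto simp: Sg_def)
        ultimately show False using sin_zero_pi_iff by fastforce
      qed
      then show "w \<in> slitG R" using nw by (simp add: slitG_iff)
    qed
    show "(\<lambda>w. Ln (- w)) ` slitG R \<subseteq> Sg"
    proof
      fix y assume "y \<in> (\<lambda>w. Ln (- w)) ` slitG R"
      then obtain w where w: "w \<in> slitG R" "y = Ln (- w)" by auto
      then have nw: "norm w > R" and nr: "\<not> (Im w = 0 \<and> Re w \<ge> 0)" by (auto simp: slitG_iff)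
      have w0: "w \<noteq> 0" using nw R by auto
      have "Re y = ln (norm w)" using w w0 by simp
      moreover have "ln (norm w) > ln R" by (rule ln_less_cancel_iff[THEN iffD2]) (use nw R in auto)
      moreover have "Im y \<noteq> pi" using w w0 nr by (auto simp: Im_Ln_eq_pi)
      moreover have "Im y \<le> pi" "Im y > -pi" using w w0 mpi_less_Im_Ln[of "-w"] Im_Ln_le_pi[of "-w"] by auto
      ultimately show "y \<in> Sg" by (auto simp: Sg_def)
    qed
    show "Ln (- (- exp z)) = z" if "z \<in> Sg" for z using that by (simp add: Sg_def)
    show "- exp (Ln (- w)) = w" if "w \<in> slitG R" for w
    proof -
      have "w \<noteq> 0" using that R by (auto simp: slitG_iff)
      then show ?thesis by simp
    qed
  qed
  then have "Sg homeomorphic (slitG R)" unfolding homeomorphic_def by blast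
  then show ?thesis using sc homeomorphic_simply_connected by blast
qed

locale L2 = L +
  fixes S :: "complex set" and \<phi> :: "complex \<Rightarrow> complex"
  assumes S: "S \<in> components (poly q -` slitG R)"
    and phi_inv: "\<And>w. w \<in> slitG R \<Longrightarrow> poly q (\<phi> w) = w"
    and phi_im: "\<phi> ` slitG R = S"
begin

lemma nc: "poly q z \<in> slitG R \<Longrightarrow> poly (pderiv q) z \<noteq> 0"
  using crit[of z] by (auto simp: slitG_iff)

lemma openC: "open (poly q -` slitG R)"
  by (intro open_vimage open_slitG continuous_intros)

lemma openS: "open S" using open_components[OF openC S] .

lemma SC: "S \<subseteq> poly q -` slitG R" using S by (rule in_components_subset)

lemma phi_in: "w \<in> slitG R \<Longrightarrow> \<phi> w \<in> S" using phi_im by auto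

lemma phi_left_inv: "z \<in> S \<Longrightarrow> \<phi> (poly q z) = z"
proof -
  define G where "G = slitG R"
  define C where "C = poly q -` G"
  have cov: "covering_space C (poly q) G" unfolding C_def G_def
    by (rule poly_covering[OF open_slitG]) (use dq d1 nc in auto)
  define w0 where "w0 = complex_of_real (- (R + 1))"
  have nw0: "norm w0 = R + 1" unfolding w0_def norm_of_real using Rpos by simp
  have "Im w0 = 0" "Re w0 < 0" using Rpos by (auto simp: w0_def)
  then have w0G: "w0 \<in> G" using nw0 by (simp add: G_def slitG_iff)
  define a where "a = \<phi> w0"
  have aS: "a \<in> S" using phi_in w0G by (simp add: a_def G_def)
  have aC: "a \<in> C" using aS SC by (auto simp: C_def G_def)
  have qa: "poly q a = w0" using phi_inv w0G by (simp add: a_def G_def)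
  obtain psi where psi: "continuous_on G psi" "psi \<in> G \<rightarrow> C" "psi w0 = a" "\<And>y. y \<in> G \<Longrightarrow> poly q (psi y) = id y"
    using covering_space_lift_strong[OF cov aC w0G, of id] simply_connected_slitG[OF Rpos]
      open_imp_locally_path_connected[OF open_slitG] qa
    by (auto simp: G_def)
  have psiq: "poly q (psi y) = y" if "y \<in> G" for y using psi(4)[OF that] by simp
  obtain x where x: "x \<in> C" "S = connected_component_set C x" using S by (auto simp: components_iff C_def G_def)
  have "psi ` G \<subseteq> connected_component_set C a"
  proof (rule connected_component_maximal)
    show "a \<in> psi ` G" using psi(3) w0G by force
    show "connected (psi ` G)"
      by (rule connected_continuous_image[OF psi(1)])
         (use simply_connected_imp_connected[OF simply_connected_slitG[OF Rpos]] in \<open>simp add: G_def\<close>)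
    show "psi ` G \<subseteq> C" using psi(2) by auto
  qed
  moreover have "connected_component_set C a = S" using aS x connected_component_eq by blast
  ultimately have psiS: "psi ` G \<subseteq> S" by simp
  define A where "A = {z \<in> S. psi (poly q z) - z = 0}"
  have qS: "poly q ` S \<subseteq> G" using SC by (auto simp: G_def)
  have contS: "continuous_on S (\<lambda>z. psi (poly q z) - z)"
    by (intro continuous_intros continuous_on_compose2[OF psi(1)] qS)
  have cl: "closedin (top_of_set S) A" unfolding A_def
    by (rule continuous_closedin_preimage_constant[OF contS])
  have op: "openin (top_of_set S) A"
    unfolding openin_euclidean_subtopology_iff
  proof (intro conjI ballI)
    show "A \<subseteq> S" by (auto simp: A_def)
    fix z assume zA: "z \<in> A"
    then have zS: "z \<in> S" and pz: "psi (poly q z) = z" by (auto simp: A_def)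
    have qzG: "poly q z \<in> G" using zS qS by auto
    have "poly (pderiv q) z \<noteq> 0" using nc qzG by (simp add: G_def)
    moreover have "deriv (poly q) z = poly (pderiv q) z" by (rule DERIV_imp_deriv[OF poly_DERIV])
    ultimately obtain r0 where r0: "r0 > 0" "inj_on (poly q) (ball z r0)"
      using has_complex_derivative_locally_injective[of "poly q" UNIV z] poly_holo by auto
    obtain del where del: "del > 0" "\<And>w. w \<in> G \<Longrightarrow> dist w (poly q z) < del \<Longrightarrow> dist (psi w) (psi (poly q z)) < r0"
      using psi(1) qzG r0(1) unfolding continuous_on_iff by meson
    have "continuous_on UNIV (poly q)" by (intro continuous_intros)
    then obtain eps where eps: "eps > 0" "\<And>z'. dist z' z < eps \<Longrightarrow> dist (poly q z') (poly q z) < del"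
      using del(1) unfolding continuous_on_iff by blast
    show "\<exists>e>0. \<forall>x'\<in>S. dist x' z < e \<longrightarrow> x' \<in> A"
    proof (intro exI[of _ "min eps r0"] conjI ballI impI)
      show "min eps r0 > 0" using eps r0 by simp
      fix z' assume z'S: "z' \<in> S" and dz: "dist z' z < min eps r0"
      have qz'G: "poly q z' \<in> G" using z'S qS by auto
      have "dist (psi (poly q z')) z < r0" using del(2)[OF qz'G] eps(2)[of z'] dz pz by simp
      then have "psi (poly q z') \<in> ball z r0" by (simp add: dist_commute)
      moreover have "z' \<in> ball z r0" using dz by (simp add: dist_commute)
      moreover have "poly q (psi (poly q z')) = poly q z'" using psiq[OF qz'G] .
      ultimately have "psi (poly q z') = z'" using r0(2) by (meson inj_onD)
      then show "z' \<in> A" using z'S by (simp add: A_def)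
    qed
  qed
  have "a \<in> A" using aS psi(3) qa by (simp add: A_def)
  then have "A = S" using connected_clopen[THEN iffD1, OF in_components_connected[OF S]] op cl by blast
  then have psi_left: "psi (poly q z) = z" if "z \<in> S" for z using that by (auto simp: A_def)
  assume zS: "z \<in> S"
  have qzG: "poly q z \<in> G" using zS qS by auto
  have "\<phi> (poly q z) \<in> S" using phi_in qzG by (simp add: G_def)
  then have "psi (poly q (\<phi> (poly q z))) = \<phi> (poly q z)" by (rule psi_left)
  then have "psi (poly q z) = \<phi> (poly q z)" using phi_inv qzG by (simp add: G_def)
  then show "\<phi> (poly q z) = z" using psi_left[OF zS] by simp
qed

lemma phi_deriv:
  assumes w: "w \<in> slitG R"
  shows "(\<phi> has_field_derivative inverse (poly (pderiv q) (\<phi> w))) (at w)"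
proof -
  have "(\<phi> has_field_derivative inverse (poly (pderiv q) (\<phi> w))) (at (poly q (\<phi> w)))"
  proof (rule has_field_derivative_inverse_strong[OF poly_DERIV _ openS])
    show "poly (pderiv q) (\<phi> w) \<noteq> 0" using nc phi_inv w by simp
    show "\<phi> w \<in> S" using phi_in w .
    show "continuous_on S (poly q)" by (intro continuous_intros)
    show "\<And>z. z \<in> S \<Longrightarrow> \<phi> (poly q z) = z" by (rule phi_left_inv)
  qed
  then show ?thesis using phi_inv w by simp
qed

end

lemma prim_deriv:
  fixes p q :: "complex poly"
  shows "((\<lambda>z. contour_integral (linepath 0 z) (\<lambda>t. poly p t * exp (poly q t))) has_field_derivative
           poly p z * exp (poly q z)) (at z)"
proof -
  define f where "f = (\<lambda>t. poly p t * exp (poly q t))"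
  have holf: "f holomorphic_on A" for A
    unfolding f_def by (intro holomorphic_intros poly_holo)
  have "((\<lambda>z. contour_integral (linepath 0 z) f) has_field_derivative f z) (at z)"
  proof (rule triangle_contour_integrals_starlike_primitive[of UNIV])
    show "continuous_on UNIV f" using holf holomorphic_on_imp_continuous_on by blast
    fix b c :: complex
    show "contour_integral (linepath 0 b) f + contour_integral (linepath b c) f + contour_integral (linepath c 0) f = 0"
      by (rule has_chain_integral_chain_integral3[OF Cauchy_theorem_triangle[OF holf]])
  qed auto
  then show ?thesis by (simp add: f_def)
qed

context L2 begin

lemma K_deriv:
  assumes gdef: "\<And>z. g z = contour_integral (linepath 0 z) (\<lambda>t. poly p t * exp (poly q t)) + c"
    and w: "w \<in> slitG R"
  shows "((\<lambda>w. g (\<phi> w) - FF p q lam (\<phi> w)) has_field_derivative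
            exp w * (rr p q lam (\<phi> w) / poly (pderiv q) (\<phi> w))) (at w)"
proof -
  define z where "z = \<phi> w"
  have qz: "poly q z = w" using phi_inv w by (simp add: z_def)
  have q1z: "poly (pderiv q) z \<noteq> 0" using nc w qz by simp
  have qz0: "poly q z \<noteq> 0" using w qz Rpos by (auto simp: slitG_iff)
  have g': "(g has_field_derivative poly p z * exp (poly q z)) (at z)"
  proof -
    have "g = (\<lambda>z. contour_integral (linepath 0 z) (\<lambda>t. poly p t * exp (poly q t)) + c)"
      using gdef by auto
    moreover have "((\<lambda>z. contour_integral (linepath 0 z) (\<lambda>t. poly p t * exp (poly q t)) + c) has_field_derivative
        (poly p z * exp (poly q z) + 0)) (at z)"
      by (rule DERIV_add[OF prim_deriv DERIV_const])
    ultimately show ?thesis by simp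
  qed
  have E': "((\<lambda>z. g z - FF p q lam z) has_field_derivative
      poly p z * exp (poly q z) - exp (poly q z) * (poly p z - rr p q lam z)) (at z)"
    by (rule DERIV_diff[OF g' FF_deriv[OF q1z qz0]])
  have "((\<lambda>w. g (\<phi> w) - FF p q lam (\<phi> w)) has_field_derivative
      (poly p z * exp (poly q z) - exp (poly q z) * (poly p z - rr p q lam z)) * inverse (poly (pderiv q) z)) (at w)"
    using DERIV_chain2[OF E'[unfolded z_def] phi_deriv[OF w]] by (simp add: z_def)
  moreover have "(poly p z * exp (poly q z) - exp (poly q z) * (poly p z - rr p q lam z)) * inverse (poly (pderiv q) z)
     = exp w * (rr p q lam z / poly (pderiv q) z)"
    using qz by (simp add: algebra_simps divide_inverse)
  ultimately show ?thesis by (simp add: z_def)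
qed

end

lemma summ_b: "summable (\<lambda>n::nat. exp (- real n) * (real n + 2) powr b)"
proof (rule summable_comparison_test_bigo)
  show "summable (\<lambda>n. norm (real n powr (-2)))" using summable_real_powr_iff[of "-2"] by simp
  show "(\<lambda>n::nat. exp (- real n) * (real n + 2) powr b) \<in> O(\<lambda>n. real n powr (-2))" by real_asymp
qed

lemma powr_le_abs:
  fixes x T a :: real
  assumes "1 \<le> x" "x \<le> T"
  shows "x powr a \<le> T powr \<bar>a\<bar>"
proof (cases "a \<ge> 0")
  case True
  then show ?thesis using assms by (simp add: powr_mono2)
next
  case False
  have "x powr a \<le> 1 powr a" using assms False by (intro powr_mono2') auto
  then have "x powr a \<le> 1" by simp
  also have "1 \<le> T powr \<bar>a\<bar>" using assms by (intro ge_one_powr_ge_zero) auto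
  finally show ?thesis .
qed

locale RayL =
  fixes K K' :: "complex \<Rightarrow> complex" and R h C a :: real
  assumes h1: "h \<ge> 1" and hR: "h > R" and C0: "C \<ge> 0"
    and Kderiv: "\<And>s. s \<in> slitG R \<Longrightarrow> (K has_field_derivative K' s) (at s)"
    and Kbound: "\<And>s. s \<in> slitG R \<Longrightarrow> norm s \<ge> h \<Longrightarrow> norm (K' s) \<le> C * exp (Re s) * norm s powr a"
begin

definition RayOK :: "complex \<Rightarrow> bool" where
  "RayOK u \<longleftrightarrow> norm u \<ge> 1 \<and> (\<forall>t\<ge>0. u - complex_of_real t \<in> slitG R \<and> norm (u - complex_of_real t) \<ge> h
      \<and> norm u \<le> (1 + t) * norm (u - complex_of_real t))"

lemma seg_bound:
  assumes "\<And>s. s \<in> closed_segment u v \<Longrightarrow> s \<in> slitG R \<and> norm s \<ge> h \<and> C * exp (Re s) * norm s powr a \<le> B"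
  shows "norm (K u - K v) \<le> B * norm (u - v)"
proof (rule field_differentiable_bound[OF convex_closed_segment])
  fix s assume s: "s \<in> closed_segment u v"
  show "(K has_field_derivative K' s) (at s within closed_segment u v)"
    using Kderiv assms[OF s] by (blast intro: has_field_derivative_at_within)
  show "norm (K' s) \<le> B" using Kbound[of s] assms[OF s] by auto
qed auto

lemma seg_param:
  assumes "s \<in> closed_segment (u - of_nat k) (u - of_nat (Suc k))"
  shows "\<exists>t. real k \<le> t \<and> t \<le> real k + 1 \<and> s = u - complex_of_real t"
proof -
  obtain th where th: "0 \<le> th" "th \<le> 1" "s = (1 - th) *\<^sub>R (u - of_nat k) + th *\<^sub>R (u - of_nat (Suc k))"
    using assms by (auto simp: in_segment)
  have "s = u - complex_of_real (real k + th)" using th(3)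
    by (simp add: scaleR_conv_of_real algebra_simps)
  then show ?thesis using th by (intro exI[of _ "real k + th"]) auto
qed

lemma ray_step:
  assumes u: "RayOK u"
  shows "norm (K (u - of_nat k) - K (u - of_nat (Suc k)))
     \<le> C * exp (Re u) * norm u powr a * (exp (- real k) * (real k + 2) powr \<bar>a\<bar>)"
proof -
  have "norm (K (u - of_nat k) - K (u - of_nat (Suc k)))
     \<le> (C * exp (Re u) * norm u powr a * (exp (- real k) * (real k + 2) powr \<bar>a\<bar>)) * norm ((u - of_nat k) - (u - of_nat (Suc k)))"
  proof (rule seg_bound)
    fix s assume s: "s \<in> closed_segment (u - of_nat k) (u - of_nat (Suc k))"
    obtain t where t: "real k \<le> t" "t \<le> real k + 1" "s = u - complex_of_real t" using seg_param[OF s] by blast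
    have t0: "t \<ge> 0" using t by simp
    have u1: "norm u \<ge> 1" and sG: "s \<in> slitG R" and sh: "norm s \<ge> h" and us: "norm u \<le> (1 + t) * norm s"
      using u t0 t(3) by (auto simp: RayOK_def)
    have s_pos: "norm s > 0" using sh h1 by linarith
    have "norm s \<le> norm u + t" using t(3) t0 norm_triangle_ineq4[of u "complex_of_real t"] by simp
    also have "\<dots> \<le> (1 + t) * norm u" using u1 t0 by (simp add: algebra_simps) (metis mult_le_cancel_left1 order_less_le not_le t0 u1)
    finally have su: "norm s \<le> (1 + t) * norm u" .
    have "norm s powr a \<le> (1 + t) powr \<bar>a\<bar> * norm u powr a"
      using s_pos u1 t0 su us by (intro powr_compar) auto
    also have "\<dots> \<le> (real k + 2) powr \<bar>a\<bar> * norm u powr a"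
      using t t0 by (intro mult_right_mono powr_mono2) auto
    finally have pa: "norm s powr a \<le> (real k + 2) powr \<bar>a\<bar> * norm u powr a" .
    have ea: "exp (Re s) \<le> exp (Re u) * exp (- real k)"
      using t by (simp add: exp_add[symmetric] exp_minus_inverse t(3)) 
    have "C * exp (Re s) * norm s powr a \<le> C * (exp (Re u) * exp (- real k)) * ((real k + 2) powr \<bar>a\<bar> * norm u powr a)"
      using C0 ea pa by (intro mult_mono) auto
    also have "\<dots> = C * exp (Re u) * norm u powr a * (exp (- real k) * (real k + 2) powr \<bar>a\<bar>)"
      by (simp add: mult_ac)
    finally show "s \<in> slitG R \<and> h \<le> norm s \<and> C * exp (Re s) * norm s powr a
       \<le> C * exp (Re u) * norm u powr a * (exp (- real k) * (real k + 2) powr \<bar>a\<bar>)"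
      using sG sh by simp
  qed
  then show ?thesis by simp
qed

definition S0 :: real where "S0 = (\<Sum>n. exp (- real n) * (real n + 2) powr \<bar>a\<bar>)"

lemma ray_limit:
  assumes u: "RayOK u"
  shows "\<exists>L. (\<lambda>n. K (u - of_nat n)) \<longlonglongrightarrow> L \<and> norm (K u - L) \<le> C * exp (Re u) * norm u powr a * S0"
proof -
  define D where "D = C * exp (Re u) * norm u powr a"
  define b where "b = (\<lambda>n::nat. exp (- real n) * (real n + 2) powr \<bar>a\<bar>)"
  define f where "f = (\<lambda>k::nat. K (u - of_nat k) - K (u - of_nat (Suc k)))"
  have D0: "D \<ge> 0" using C0 by (simp add: D_def)
  have fb: "norm (f k) \<le> D * b k" for k using ray_step[OF u, of k] by (simp add: f_def D_def b_def)
  have sb: "summable b" using summ_b by (simp add: b_def)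
  have sDb: "summable (\<lambda>k. D * b k)" using sb by (rule summable_mult)
  have snf: "summable (\<lambda>k. norm (f k))" by (rule summable_comparison_test[OF _ sDb]) (use fb in auto)
  have sf: "summable f" using snf by (rule summable_norm_cancel)
  have tel: "(\<Sum>k<n. f k) = K u - K (u - of_nat n)" for n
    using sum_lessThan_telescope'[of "\<lambda>k. K (u - of_nat k)" n] by (simp add: f_def)
  have lim: "(\<lambda>n. K u - (\<Sum>k<n. f k)) \<longlonglongrightarrow> K u - suminf f"
    by (intro tendsto_intros summable_LIMSEQ sf)
  have "(\<lambda>n. K (u - of_nat n)) \<longlonglongrightarrow> K u - suminf f" using lim by (simp add: tel)
  moreover have "norm (K u - (K u - suminf f)) \<le> D * S0"
  proof -
    have "norm (suminf f) \<le> (\<Sum>k. norm (f k))" by (rule summable_norm[OF snf])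
    also have "\<dots> \<le> (\<Sum>k. D * b k)" by (rule suminf_le[OF fb snf sDb])
    also have "\<dots> = D * S0" using sb by (simp add: suminf_mult S0_def b_def)
    finally show ?thesis by simp
  qed
  ultimately show ?thesis by (auto simp: D_def)
qed

lemma ray_same:
  assumes u: "RayOK u" and v: "RayOK v"
  shows "(\<lambda>n. K (u - of_nat n) - K (v - of_nat n)) \<longlonglongrightarrow> 0"
proof (rule Lim_null_comparison)
  define Mr where "Mr = max (Re u) (Re v)"
  define M where "M = max (norm u) (norm v)"
  define g where "g = (\<lambda>n::nat. (C * exp Mr * norm (u - v)) * (exp (- real n) * (M + real n) powr \<bar>a\<bar>))"
  show "(g \<longlongrightarrow> 0) sequentially"
  proof -
    have "(\<lambda>n::nat. exp (- real n) * (M + real n) powr \<bar>a\<bar>) \<longlonglongrightarrow> 0" by real_asymp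
    then show ?thesis unfolding g_def by (rule tendsto_mult_right_zero)
  qed
  have ev: "eventually (\<lambda>n. real n \<ge> Mr + h) sequentially"
    by real_asymp
  show "eventually (\<lambda>n. norm (K (u - of_nat n) - K (v - of_nat n)) \<le> g n) sequentially"
  proof (rule eventually_mono[OF ev])
    fix n :: nat assume n: "real n \<ge> Mr + h"
    have "norm (K (u - of_nat n) - K (v - of_nat n))
       \<le> (C * exp Mr * (exp (- real n) * (M + real n) powr \<bar>a\<bar>)) * norm ((u - of_nat n) - (v - of_nat n))"
    proof (rule seg_bound)
      fix s assume s: "s \<in> closed_segment (u - of_nat n) (v - of_nat n)"
      obtain th where th: "0 \<le> th" "th \<le> 1" "s = (1 - th) *\<^sub>R (u - of_nat n) + th *\<^sub>R (v - of_nat n)"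
        using s by (auto simp: in_segment)
      have s_eq: "s = ((1 - th) *\<^sub>R u + th *\<^sub>R v) - of_nat n" using th(3) by (simp add: algebra_simps)
      have r1: "(1 - th) * Re u \<le> (1 - th) * Mr" by (rule mult_left_mono) (use th in \<open>auto simp: Mr_def\<close>)
      have r2: "th * Re v \<le> th * Mr" by (rule mult_left_mono) (use th in \<open>auto simp: Mr_def\<close>)
      have "Re s = (1 - th) * Re u + th * Re v - real n" by (simp add: s_eq)
      then have reS: "Re s \<le> Mr - real n" using r1 r2 by (simp add: algebra_simps)
      have "norm ((1 - th) *\<^sub>R u + th *\<^sub>R v) \<le> (1 - th) * M + th * M"
        using th norm_triangle_ineq[of "(1 - th) *\<^sub>R u" "th *\<^sub>R v"]
        by (smt (verit) M_def max.cobounded1 max.cobounded2 mult_left_mono norm_scaleR)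
      moreover have "norm s \<le> norm ((1 - th) *\<^sub>R u + th *\<^sub>R v) + real n"
        unfolding s_eq by (rule order_trans[OF norm_triangle_ineq4]) simp
      moreover have "(1 - th) * M + th * M = M" by (simp add: algebra_simps)
      ultimately have nsM: "norm s \<le> M + real n" by linarith
      have reh: "Re s \<le> - h" using reS n by simp
      have nsh: "norm s \<ge> h" using reh abs_Re_le_cmod[of s] by simp
      have sG: "s \<in> slitG R" using nsh hR reh h1 by (auto simp: slitG_iff)
      have "norm s powr a \<le> (M + real n) powr \<bar>a\<bar>" using nsh h1 nsM by (intro powr_le_abs) auto
      moreover have "exp (Re s) \<le> exp Mr * exp (- real n)" using reS by (simp add: exp_add[symmetric])
      ultimately have "C * exp (Re s) * norm s powr a \<le> C * (exp Mr * exp (- real n)) * (M + real n) powr \<bar>a\<bar>"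
        using C0 by (intro mult_mono) auto
      then show "s \<in> slitG R \<and> h \<le> norm s \<and> C * exp (Re s) * norm s powr a
          \<le> C * exp Mr * (exp (- real n) * (M + real n) powr \<bar>a\<bar>)"
        using sG nsh by (simp add: mult_ac)
    qed
    then show "norm (K (u - of_nat n) - K (v - of_nat n)) \<le> g n" by (simp add: g_def mult_ac)
  qed
qed

end

context RayL begin

lemma RayOK_im:
  assumes "norm u \<ge> 1" "\<bar>Im u\<bar> \<ge> h"
  shows "RayOK u"
  unfolding RayOK_def
proof (intro conjI allI impI assms(1))
  fix t :: real assume t: "t \<ge> 0"
  define s where "s = u - complex_of_real t"
  have ims: "Im s = Im u" by (simp add: s_def)
  have sh: "norm s \<ge> h" using abs_Im_le_cmod[of s] ims assms(2) by linarith
  show "h \<le> norm (u - complex_of_real t)" using sh by (simp add: s_def)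
  have "Im s \<noteq> 0" using ims assms(2) h1 by auto
  then show "u - complex_of_real t \<in> slitG R" using sh hR by (auto simp: slitG_iff s_def)
  have "norm u \<le> norm s + t" using norm_triangle_ineq[of s "complex_of_real t"] t by (simp add: s_def)
  also have "\<dots> \<le> norm s + t * norm s" using t sh h1 by (intro add_left_mono) (simp add: mult_le_cancel_left1)
  finally show "norm u \<le> (1 + t) * norm (u - complex_of_real t)" by (simp add: s_def algebra_simps)
qed

lemma RayOK_left:
  assumes "Re u \<le> 0" "norm u \<ge> h"
  shows "RayOK u"
  unfolding RayOK_def
proof (intro conjI allI impI)
  show "norm u \<ge> 1" using assms h1 by simp
  fix t :: real assume t: "t \<ge> 0"
  define s where "s = u - complex_of_real t"
  have A: "t * Re u \<le> 0" using t assms(1) by (rule mult_nonneg_nonpos)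
  have B: "t * t \<ge> 0" using t by simp
  have "(Re u - t)^2 = (Re u)^2 - 2 * (t * Re u) + t * t" by (simp add: power2_eq_square algebra_simps)
  then have "(Re u)^2 \<le> (Re u - t)^2" using A B by linarith
  then have "(norm u)^2 \<le> (norm s)^2" by (simp add: cmod_power2 s_def)
  then have us: "norm u \<le> norm s" by (rule power2_le_imp_le) simp
  then show "h \<le> norm (u - complex_of_real t)" using assms by (simp add: s_def)
  have "\<not> (Im s = 0 \<and> Re s \<ge> 0)"
  proof
    assume "Im s = 0 \<and> Re s \<ge> 0"
    then have "Im u = 0" "Re u \<ge> t" by (auto simp: s_def)
    then have "Re u = 0" "Im u = 0" using assms t by auto
    then have "u = 0" by (simp add: complex_eq_iff)
    then show False using assms h1 by simp
  qed
  then show "u - complex_of_real t \<in> slitG R" using us assms hR by (auto simp: slitG_iff s_def)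
  have "0 \<le> t * norm s" using t by simp
  moreover have "(1 + t) * norm s = norm s + t * norm s" by (simp add: algebra_simps)
  ultimately show "norm u \<le> (1 + t) * norm (u - complex_of_real t)" using us by (simp add: s_def)
qed

lemma S0_nonneg: "S0 \<ge> 0"
  unfolding S0_def by (intro suminf_nonneg summ_b) auto

lemma ray_bound_all:
  "\<exists>cS. \<forall>u. RayOK u \<longrightarrow> norm (K u - cS) \<le> C * exp (Re u) * norm u powr a * S0"
proof -
  define u0 where "u0 = complex_of_real (- h)"
  have "norm u0 = h" using h1 unfolding u0_def norm_of_real by simp
  then have ok0: "RayOK u0" by (intro RayOK_left) (auto simp: u0_def)
  obtain L0 where L0: "(\<lambda>n. K (u0 - of_nat n)) \<longlonglongrightarrow> L0" using ray_limit[OF ok0] by blast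
  show ?thesis
  proof (intro exI[of _ L0] allI impI)
    fix u assume u: "RayOK u"
    obtain L where L: "(\<lambda>n. K (u - of_nat n)) \<longlonglongrightarrow> L" "norm (K u - L) \<le> C * exp (Re u) * norm u powr a * S0"
      using ray_limit[OF u] by blast
    have "(\<lambda>n. (K (u - of_nat n) - K (u0 - of_nat n)) + K (u0 - of_nat n)) \<longlonglongrightarrow> 0 + L0"
      by (intro tendsto_add ray_same u ok0 L0)
    then have "(\<lambda>n. K (u - of_nat n)) \<longlonglongrightarrow> L0" by simp
    then have "L = L0" using L(1) LIMSEQ_unique by blast
    then show "norm (K u - L0) \<le> C * exp (Re u) * norm u powr a * S0" using L(2) by simp
  qed
qed

theorem ray_main:
  "\<exists>cS C'. \<forall>w. w \<in> slitG R \<and> norm w \<ge> 2 * h \<longrightarrow> norm (K w - cS) \<le> C' * exp (Re w) * norm w powr a"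
proof -
  obtain cS where cS: "\<And>u. RayOK u \<Longrightarrow> norm (K u - cS) \<le> C * exp (Re u) * norm u powr a * S0"
    using ray_bound_all by blast
  define C' where "C' = (C * S0 + 2 * h * C) * 2 powr \<bar>a\<bar>"
  have S00: "S0 \<ge> 0" by (rule S0_nonneg)
  have two: "(2::real) powr \<bar>a\<bar> \<ge> 1" by (intro ge_one_powr_ge_zero) auto
  show ?thesis
  proof (intro exI[of _ cS] exI[of _ C'] allI impI)
    fix w assume w: "w \<in> slitG R \<and> norm w \<ge> 2 * h"
    have wG: "w \<in> slitG R" and w2h: "norm w \<ge> 2 * h" using w by auto
    have E0: "0 \<le> C * exp (Re w) * norm w powr a" using C0 by simp
    show "norm (K w - cS) \<le> C' * exp (Re w) * norm w powr a"
    proof (cases "\<bar>Im w\<bar> \<ge> h \<or> Re w \<le> 0")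
      case True
      then have "RayOK w" using w2h h1 by (auto intro: RayOK_im RayOK_left)
      then have "norm (K w - cS) \<le> C * exp (Re w) * norm w powr a * S0" by (rule cS)
      also have "\<dots> \<le> C * exp (Re w) * norm w powr a * (S0 * 2 powr \<bar>a\<bar> + 2 * h * 2 powr \<bar>a\<bar>)"
      proof (rule mult_left_mono[OF _ E0])
        have "S0 \<le> S0 * 2 powr \<bar>a\<bar>" using S00 two by (simp add: mult_le_cancel_left1)
        moreover have "0 \<le> 2 * h * 2 powr \<bar>a\<bar>" using h1 by simp
        ultimately show "S0 \<le> S0 * 2 powr \<bar>a\<bar> + 2 * h * 2 powr \<bar>a\<bar>" by linarith
      qed
      also have "\<dots> = C' * exp (Re w) * norm w powr a" by (simp add: C'_def algebra_simps)
      finally show ?thesis .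
    next
      case False
      then have imw: "\<bar>Im w\<bar> < h" and rew: "Re w > 0" by auto
      have imw0: "Im w \<noteq> 0" using wG rew by (auto simp: slitG_iff)
      have "norm w \<le> \<bar>Re w\<bar> + \<bar>Im w\<bar>" by (rule cmod_le)
      then have rew2: "Re w \<ge> norm w / 2" and rewh: "Re w \<ge> h" using imw rew w2h by auto
      define sg where "sg = (if Im w > 0 then 1 else -1 :: real)"
      have sg: "sg * Im w = \<bar>Im w\<bar>" "\<bar>sg\<bar> = 1" "sg * sg = 1" using imw0 by (auto simp: sg_def)
      define w' where "w' = Complex (Re w) (sg * h)"
      have rew': "Re w' = Re w" and imw': "Im w' = sg * h" by (simp_all add: w'_def)
      have nw'1: "norm w' \<ge> Re w" using abs_Re_le_cmod[of w'] rew' by simp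
      have nw'2: "norm w' \<le> 2 * norm w"
      proof -
        have "norm w' \<le> \<bar>Re w'\<bar> + \<bar>Im w'\<bar>" by (rule cmod_le)
        also have "\<dots> = Re w + h" using rew' imw' sg rew h1 by (simp add: abs_mult)
        also have "\<dots> \<le> 2 * norm w" using abs_Re_le_cmod[of w] w2h by simp
        finally show ?thesis .
      qed
      have okw': "RayOK w'"
        by (rule RayOK_im) (use nw'1 rewh h1 imw' sg in \<open>auto simp: abs_mult\<close>)
      have "norm w' powr a \<le> 2 powr \<bar>a\<bar> * norm w powr a"
        using nw'1 nw'2 rew2 rew w2h h1 by (intro powr_compar) auto
      then have "C * exp (Re w) * norm w' powr a * S0 \<le> C * exp (Re w) * (2 powr \<bar>a\<bar> * norm w powr a) * S0"
        using C0 S00 by (intro mult_right_mono mult_left_mono) auto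
      then have b2: "norm (K w' - cS) \<le> C * exp (Re w) * (2 powr \<bar>a\<bar> * norm w powr a) * S0"
        using cS[OF okw'] rew' by simp
      have b1: "norm (K w - K w') \<le> (C * exp (Re w) * (2 powr \<bar>a\<bar> * norm w powr a)) * norm (w - w')"
      proof (rule seg_bound)
        fix s assume s: "s \<in> closed_segment w w'"
        obtain th where th: "0 \<le> th" "th \<le> 1" "s = (1 - th) *\<^sub>R w + th *\<^sub>R w'"
          using s by (auto simp: in_segment)
        have "Re s = (1 - th) * Re w + th * Re w'" by (simp add: th(3))
        then have res: "Re s = Re w" using rew' by (simp add: algebra_simps)
        have ims: "Im s = (1 - th) * Im w + th * (sg * h)" using th(3) imw' by simp
        have "sg * Im s = (1 - th) * (sg * Im w) + th * ((sg * sg) * h)" by (simp add: ims algebra_simps)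
        then have sgI: "sg * Im s = (1 - th) * \<bar>Im w\<bar> + th * h" using sg by simp
        moreover have "(1 - th) * \<bar>Im w\<bar> + th * h > 0"
        proof (cases "th = 1")
          case True then show ?thesis using h1 by simp
        next
          case False then have "(1 - th) * \<bar>Im w\<bar> > 0" using th imw0 by simp
          then show ?thesis using th h1 by (smt (verit) mult_nonneg_nonneg)
        qed
        ultimately have ims0: "Im s \<noteq> 0" by auto
        have "\<bar>Im s\<bar> = (1 - th) * \<bar>Im w\<bar> + th * h"
          using sgI \<open>(1 - th) * \<bar>Im w\<bar> + th * h > 0\<close> sg by (metis abs_mult abs_of_pos mult_1)
        also have "\<dots> \<le> (1 - th) * h + th * h" using th imw by (intro add_right_mono mult_left_mono) auto
        finally have imsh: "\<bar>Im s\<bar> \<le> h" by (simp add: algebra_simps)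
        have ns1: "norm s \<ge> Re w" using abs_Re_le_cmod[of s] res by simp
        have ns2: "norm s \<le> 2 * norm w"
        proof -
          have "norm s \<le> \<bar>Re s\<bar> + \<bar>Im s\<bar>" by (rule cmod_le)
          also have "\<dots> \<le> Re w + h" using res rew imsh by simp
          also have "\<dots> \<le> 2 * norm w" using abs_Re_le_cmod[of w] w2h by simp
          finally show ?thesis .
        qed
        have sh: "norm s \<ge> h" using ns1 rewh by simp
        have sG: "s \<in> slitG R" using sh hR ims0 by (auto simp: slitG_iff)
        have "norm s powr a \<le> 2 powr \<bar>a\<bar> * norm w powr a"
          using ns1 ns2 rew2 rew w2h h1 by (intro powr_compar) auto
        then have "C * exp (Re s) * norm s powr a \<le> C * exp (Re w) * (2 powr \<bar>a\<bar> * norm w powr a)"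
          using res C0 by (simp add: mult_left_mono)
        then show "s \<in> slitG R \<and> h \<le> norm s \<and> C * exp (Re s) * norm s powr a \<le> C * exp (Re w) * (2 powr \<bar>a\<bar> * norm w powr a)"
          using sG sh by simp
      qed
      have dww: "norm (w - w') \<le> 2 * h"
      proof -
        have eq: "w - w' = complex_of_real (Im w - sg * h) * \<i>" using rew' imw' by (simp add: complex_eq_iff)
        have "norm (w - w') = norm (complex_of_real (Im w - sg * h)) * norm \<i>" by (simp only: eq norm_mult)
        also have "\<dots> = \<bar>Im w - sg * h\<bar>" by (simp only: norm_of_real norm_ii mult_1_right)
        finally have "norm (w - w') = \<bar>Im w - sg * h\<bar>" .
        also have "\<dots> \<le> \<bar>Im w\<bar> + h" using abs_triangle_ineq4[of "Im w" "sg * h"] sg h1 by (simp add: abs_mult)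
        finally show ?thesis using imw by simp
      qed
      have "norm (K w - cS) \<le> norm (K w - K w') + norm (K w' - cS)" using norm_triangle_ineq[of "K w - K w'" "K w' - cS"] by simp
      also have "\<dots> \<le> (C * exp (Re w) * (2 powr \<bar>a\<bar> * norm w powr a)) * (2 * h)
            + C * exp (Re w) * (2 powr \<bar>a\<bar> * norm w powr a) * S0"
      proof (rule add_mono[OF order_trans[OF b1] b2])
        show "C * exp (Re w) * (2 powr \<bar>a\<bar> * norm w powr a) * norm (w - w')
            \<le> C * exp (Re w) * (2 powr \<bar>a\<bar> * norm w powr a) * (2 * h)"
          using dww C0 by (intro mult_left_mono) auto
      qed
      also have "\<dots> = C' * exp (Re w) * norm w powr a" by (simp add: C'_def algebra_simps)
      finally show ?thesis .
    qed
  qed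
qed

end

theorem lemma4p1:
  fixes p q :: "complex poly" and m d :: nat and c :: complex and R :: real
    and g \<phi> :: "complex \<Rightarrow> complex" and S :: "complex set"
  assumes "degree p = m" and "lead_coeff p = of_nat d"
    and "degree q = d" and "d \<ge> 1" and "lead_coeff q = 1"
    and "\<And>z. g z = contour_integral (linepath 0 z) (\<lambda>t. poly p t * exp (poly q t)) + c"
    and "R > 0"
    and "\<And>z. poly (pderiv q) z = 0 \<Longrightarrow> poly q z \<in> ball 0 R"
    and "\<And>z. norm z \<ge> (1/2) * R powr (1 / real d) \<Longrightarrow>
           (1/2) ^ d * norm z ^ d \<le> norm (poly q z) \<and> norm (poly q z) \<le> 2 ^ d * norm z ^ d"
    and "S \<in> components (poly q -` slitG R)"
    and "\<And>w. w \<in> slitG R \<Longrightarrow> poly q (\<phi> w) = w"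
    and "\<phi> ` slitG R = S"
  shows "\<exists>cS :: complex. \<exists>C :: real. eventually (\<lambda>w. w \<in> slitG R \<longrightarrow>
           norm (g (\<phi> w) - cS
                 - poly p (\<phi> w) / poly (pderiv q) (\<phi> w)
                   * (1 + ((of_nat d - 1 - of_nat m) / of_nat d) / w) * exp w)
           \<le> C * norm (poly p (\<phi> w) / poly (pderiv q) (\<phi> w) * exp w)
               * norm w powr (- 1 - 1 / real d)) at_infinity"
proof -
  note A = assms
  interpret L2 p q m d R S \<phi>
    by unfold_locales (use A in auto)
  obtain C0 where C0: "\<And>z. norm (poly q z) \<ge> hh \<Longrightarrow> norm (rr p q lam z / poly (pderiv q) z) \<le> C0 * norm (poly q z) powr a"
    using B_all by blast
  define C where "C = max C0 0"
  define K where "K = (\<lambda>w. g (\<phi> w) - FF p q lam (\<phi> w))"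
  define K' where "K' = (\<lambda>w. exp w * (rr p q lam (\<phi> w) / poly (pderiv q) (\<phi> w)))"
  interpret RayL K K' R hh C a
  proof unfold_locales
    show "hh \<ge> 1" "hh > R" using hh_gt by auto
    show "C \<ge> 0" by (simp add: C_def)
    fix s assume s: "s \<in> slitG R"
    show "(K has_field_derivative K' s) (at s)"
      unfolding K_def K'_def by (rule K_deriv[OF A(6) s])
    assume sh: "norm s \<ge> hh"
    have qs: "poly q (\<phi> s) = s" using phi_inv s .
    have "norm (rr p q lam (\<phi> s) / poly (pderiv q) (\<phi> s)) \<le> C0 * norm s powr a"
      using C0[of "\<phi> s"] qs sh by simp
    also have "\<dots> \<le> C * norm s powr a" by (intro mult_right_mono) (auto simp: C_def)
    finally have "exp (Re s) * norm (rr p q lam (\<phi> s) / poly (pderiv q) (\<phi> s)) \<le> exp (Re s) * (C * norm s powr a)"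
      by (rule mult_left_mono) simp
    moreover have "norm (K' s) = exp (Re s) * norm (rr p q lam (\<phi> s) / poly (pderiv q) (\<phi> s))"
      unfolding K'_def by (simp only: norm_mult norm_exp_eq_Re)
    ultimately show "norm (K' s) \<le> C * exp (Re s) * norm s powr a" by (simp add: mult_ac)
  qed
  obtain cS C' where cS: "\<And>w. w \<in> slitG R \<and> norm w \<ge> 2 * hh \<Longrightarrow> norm (K w - cS) \<le> C' * exp (Re w) * norm w powr a"
    using ray_main by blast
  obtain cc Z where cc: "cc > 0" "\<And>z. norm z \<ge> Z \<Longrightarrow>
      norm (poly p z / poly (pderiv q) z) \<ge> cc * norm (poly q z) powr (a + 1 + 1 / real d)"
    using D_lower by blast
  have "continuous_on (cball 0 Z) (\<lambda>z. norm (poly q z))" by (intro continuous_intros)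
  then obtain Mq where Mq: "\<forall>z\<in>cball 0 Z. norm (poly q z) \<le> Mq"
    using bounded_on_compact[of "cball 0 Z" "\<lambda>z. norm (poly q z)"] by auto
  define W0 where "W0 = max (2 * hh) (Mq + 1)"
  define Cf where "Cf = max C' 0 / cc"
  show ?thesis
  proof (intro exI[of _ cS] exI[of _ Cf])
    show "eventually (\<lambda>w. w \<in> slitG R \<longrightarrow>
           norm (g (\<phi> w) - cS
                 - poly p (\<phi> w) / poly (pderiv q) (\<phi> w)
                   * (1 + ((of_nat d - 1 - of_nat m) / of_nat d) / w) * exp w)
           \<le> Cf * norm (poly p (\<phi> w) / poly (pderiv q) (\<phi> w) * exp w)
               * norm w powr (- 1 - 1 / real d)) at_infinity"
      unfolding eventually_at_infinity
    proof (intro exI[of _ W0] allI impI)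
      fix w :: complex assume wW: "norm w \<ge> W0" and wG: "w \<in> slitG R"
      define z where "z = \<phi> w"
      have qz: "poly q z = w" using phi_inv wG by (simp add: z_def)
      have w2: "norm w \<ge> 2 * hh" using wW by (simp add: W0_def)
      have wpos: "norm w > 0" using w2 hh_gt by linarith
      have zZ: "norm z \<ge> Z"
      proof (rule ccontr)
        assume "\<not> norm z \<ge> Z"
        then have "z \<in> cball 0 Z" by simp
        then have "norm w \<le> Mq" using Mq qz by auto
        then show False using wW by (simp add: W0_def)
      qed
      define P where "P = poly p z / poly (pderiv q) z"
      have eqK: "g (\<phi> w) - cS - poly p (\<phi> w) / poly (pderiv q) (\<phi> w)
                   * (1 + ((of_nat d - 1 - of_nat m) / of_nat d) / w) * exp w = K w - cS"
        by (simp add: K_def FF_def z_def[symmetric] qz lam_def)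
      have b1: "norm (K w - cS) \<le> max C' 0 * exp (Re w) * norm w powr a"
        using cS[of w] wG w2 by (smt (verit, best) exp_gt_zero max.cobounded1 mult_right_mono powr_ge_zero mult_nonneg_nonneg)
      have Pb: "norm P \<ge> cc * norm w powr (a + 1 + 1 / real d)" using cc(2)[OF zZ] qz by (simp add: P_def)
      have split: "norm w powr a = norm w powr (a + 1 + 1 / real d) * norm w powr (- 1 - 1 / real d)"
        by (simp add: powr_add[symmetric])
      have "max C' 0 * exp (Re w) * norm w powr a
          = max C' 0 * exp (Re w) * norm w powr (a + 1 + 1 / real d) * norm w powr (- 1 - 1 / real d)"
        by (simp add: split mult_ac)
      also have "\<dots> \<le> max C' 0 * exp (Re w) * (norm P / cc) * norm w powr (- 1 - 1 / real d)"
      proof (intro mult_right_mono mult_left_mono)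
        show "norm w powr (a + 1 + 1 / real d) \<le> norm P / cc" using Pb cc(1) by (simp add: field_simps)
      qed auto
      also have "\<dots> = Cf * norm (P * exp w) * norm w powr (- 1 - 1 / real d)"
        by (simp add: Cf_def norm_mult norm_exp_eq_Re)
      finally have ch: "max C' 0 * exp (Re w) * norm w powr a \<le> Cf * norm (P * exp w) * norm w powr (- 1 - 1 / real d)" .
      show "norm (g (\<phi> w) - cS - poly p (\<phi> w) / poly (pderiv q) (\<phi> w)
                   * (1 + ((of_nat d - 1 - of_nat m) / of_nat d) / w) * exp w)
           \<le> Cf * norm (poly p (\<phi> w) / poly (pderiv q) (\<phi> w) * exp w) * norm w powr (- 1 - 1 / real d)"
        unfolding eqK using b1 ch unfolding P_def z_def by linarith
    qed
  qed
qed

end
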